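(* Every nonempty saturated subspace of an $S^{\ast}$-well-filtered space is $S^{\ast}$-well-filtered.
   Context: All spaces are $T_0$. The specialization order of $X$ is given by $x\le y$ iff $x\in cl(\{y\})$; ${\uparrow}$ is taken with respect to it; a subset is saturated if it equals the intersection of all open sets containing it (equivalently, it is an upper set in the specialization order). $K(X)$ denotes the set of all nonempty compact saturated subsets of $X$; a family in $K(X)$ is filtered if any two members contain a common member. $X$ is $S^{\ast}$-well-filtered if for every filtered family $\{K_i\mid i\in I\}\subseteq K(X)$, every $G\in K(X)$ and every nonempty open $U$, $\bigcap_{i\in I}K_i\cap G\subseteq U$ implies $K_i\cap G\subseteq U$ for some $i$. *)

theory Defs
  imports "HOL-Analysis.Analysis"
begin

definition saturated_in :: "'a topology \<Rightarrow> 'a set \<Rightarrow> bool" where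
  "saturated_in X A \<longleftrightarrow> A \<subseteq> topspace X \<and>
     A = topspace X \<inter> \<Inter>{U. openin X U \<and> A \<subseteq> U}"

definition KX :: "'a topology \<Rightarrow> 'a set set" where
  "KX X = {K. K \<noteq> {} \<and> compactin X K \<and> saturated_in X K}"

definition filtered_KX :: "'a topology \<Rightarrow> 'a set set \<Rightarrow> bool" where
  "filtered_KX X \<K> \<longleftrightarrow> \<K> \<noteq> {} \<and> \<K> \<subseteq> KX X \<and>
     (\<forall>A\<in>\<K>. \<forall>B\<in>\<K>. \<exists>C\<in>\<K>. C \<subseteq> A \<and> C \<subseteq> B)"

definition S_star_well_filtered :: "'a topology \<Rightarrow> bool" where
  "S_star_well_filtered X \<longleftrightarrow>
     (\<forall>\<K> G U. filtered_KX X \<K> \<and> G \<in> KX X \<and> openin X U \<and> U \<noteq> {} \<and>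
        \<Inter>\<K> \<inter> G \<subseteq> U \<longrightarrow> (\<exists>K\<in>\<K>. K \<inter> G \<subseteq> U))"

end

theory Submission
  imports Defs
begin

lemma KX_sub:
  assumes Y: "saturated_in X Y" and K: "K \<in> KX (subtopology X Y)"
  shows "K \<in> KX X"
proof -
  have ne: "K \<noteq> {}" and c: "compactin (subtopology X Y) K"
    and s: "saturated_in (subtopology X Y) K" using K by (auto simp: KX_def)
  have Ysub: "Y \<subseteq> topspace X" and Yeq: "Y = topspace X \<inter> \<Inter>{U. openin X U \<and> Y \<subseteq> U}"
    using Y by (auto simp: saturated_in_def)
  have KY: "K \<subseteq> Y" and KT: "K \<subseteq> topspace X"
    and Keq: "K = (topspace X \<inter> Y) \<inter> \<Inter>{U. openin (subtopology X Y) U \<and> K \<subseteq> U}"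
    using s by (auto simp: saturated_in_def)
  have cX: "compactin X K" using c by (simp add: compactin_subtopology)
  have "topspace X \<inter> \<Inter>{W. openin X W \<and> K \<subseteq> W} \<subseteq> K"
  proof
    fix x assume x: "x \<in> topspace X \<inter> \<Inter>{W. openin X W \<and> K \<subseteq> W}"
    have "x \<in> Y"
    proof -
      have "x \<in> \<Inter>{U. openin X U \<and> Y \<subseteq> U}" using x KY by blast
      then show ?thesis using x Yeq by blast
    qed
    moreover have "x \<in> \<Inter>{U. openin (subtopology X Y) U \<and> K \<subseteq> U}"
    proof
      fix U assume "U \<in> {U. openin (subtopology X Y) U \<and> K \<subseteq> U}"
      then obtain W where W: "openin X W" "U = W \<inter> Y" and "K \<subseteq> U"
        by (auto simp: openin_subtopology)
      then have "K \<subseteq> W" by blast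
      then have "x \<in> W" using x W by blast
      then show "x \<in> U" using W \<open>x \<in> Y\<close> by blast
    qed
    ultimately show "x \<in> K" using Keq x by blast
  qed
  then have "saturated_in X K" using KT by (auto simp: saturated_in_def)
  then show ?thesis using ne cX by (simp add: KX_def)
qed

theorem mainTheorem15:
  fixes X :: "'a topology" and Y :: "'a set"
  assumes "t0_space X"
    and "S_star_well_filtered X"
    and "Y \<noteq> {}"
    and "saturated_in X Y"
  shows "S_star_well_filtered (subtopology X Y)"
  unfolding S_star_well_filtered_def
proof (intro allI impI, elim conjE)
  fix \<K> G U
  assume F: "filtered_KX (subtopology X Y) \<K>" and G: "G \<in> KX (subtopology X Y)"
    and U: "openin (subtopology X Y) U" and Une: "U \<noteq> {}" and I: "\<Inter>\<K> \<inter> G \<subseteq> U"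
  obtain W where W: "openin X W" "U = W \<inter> Y" using U by (auto simp: openin_subtopology)
  have FX: "filtered_KX X \<K>" using F KX_sub[OF assms(4)] by (auto simp: filtered_KX_def)
  have GX: "G \<in> KX X" using G KX_sub[OF assms(4)] by auto
  have GY: "G \<subseteq> Y" using G by (auto simp: KX_def saturated_in_def)
  have "W \<noteq> {}" using Une W by blast
  moreover have "\<Inter>\<K> \<inter> G \<subseteq> W" using I W by blast
  ultimately obtain K where "K \<in> \<K>" "K \<inter> G \<subseteq> W"
    using assms(2) FX GX W(1) unfolding S_star_well_filtered_def by blast
  then show "\<exists>K\<in>\<K>. K \<inter> G \<subseteq> U" using GY W by blast
qed

end
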